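(* Let $a=(a_1,\dots,a_d)\in\mathbb R^d$ with $a_i\ne0$ for all $i$, and let $\hat a=\min_{1\le i\le d}|a_i|$. Define $h(x)=\mathbf 1_{x\le a}$ for $x\in\mathbb R^d$, where $x\le a$ means $x_i\le a_i$ for all $1\le i\le d$. Then $h$ is $\big(3(d/\hat a)^{1/3},\,1/3,\,W\big)$-Lipschitz for every $d\times d$ positive semi-definite matrix $W$.
   Context: Given $\kappa>0$, $\gamma\in(0,1]$ and a $d\times d$ positive semi-definite matrix $W$, a real-valued Borel function $h$ on $\mathbb R^d$ is $(\kappa,\gamma,W)$-Lipschitz if $E((h(X)-h(X'))^2)\le\kappa^2(E\|X-X'\|^2)^{\gamma}$ for every centered Gaussian vector $(X,X')$ in $\mathbb R^{2d}$ ($X,X'$ each $d$-dimensional) with $\mathrm{cov}(X)\le W$ and $\mathrm{cov}(X')\le W$; here $\|\cdot\|$ is the Euclidean norm, $\mathrm{cov}(X)=E(XX^T)$, and $A\le B$ means $B-A$ is positive semi-definite. *)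

theory Defs
  imports "HOL-Probability.Probability"
begin

definition centered_gaussian :: "'a measure \<Rightarrow> ('a \<Rightarrow> 'b::euclidean_space) \<Rightarrow> bool" where
  "centered_gaussian M Z \<longleftrightarrow> Z \<in> borel_measurable M \<and>
     (\<forall>c::'b. \<exists>\<sigma>::real. \<sigma> \<ge> 0 \<and>
        distr M borel (\<lambda>\<omega>. c \<bullet> Z \<omega>) =
          (if \<sigma> = 0 then return borel 0 else density lborel (normal_density 0 \<sigma>)))"

definition cov_matrix :: "'a measure \<Rightarrow> ('a \<Rightarrow> real^'d) \<Rightarrow> real^'d^'d" where
  "cov_matrix M X = (\<chi> i j. integral\<^sup>L M (\<lambda>\<omega>. X \<omega> $ i * X \<omega> $ j))"

definition psd_matrix :: "real^'d^'d \<Rightarrow> bool" where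
  "psd_matrix A \<longleftrightarrow> transpose A = A \<and> (\<forall>v. 0 \<le> v \<bullet> (A *v v))"

definition loewner_le :: "real^'d^'d \<Rightarrow> real^'d^'d \<Rightarrow> bool" where
  "loewner_le A B \<longleftrightarrow> psd_matrix (B - A)"

text \<open>A centered Gaussian vector (X,X') in R^{2d} is
represented by its joint law M on the space real^'d \<times> real^'d, with X = fst, X' = snd
(all quantities involved depend only on the joint law).\<close>
definition kgw_lipschitz :: "real \<Rightarrow> real \<Rightarrow> real^'d^'d \<Rightarrow> (real^'d \<Rightarrow> real) \<Rightarrow> bool" where
  "kgw_lipschitz \<kappa> \<gamma> W h \<longleftrightarrow>
     \<kappa> > 0 \<and> 0 < \<gamma> \<and> \<gamma> \<le> 1 \<and> psd_matrix W \<and> h \<in> borel_measurable borel \<and>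
     (\<forall>M :: ((real^'d) \<times> (real^'d)) measure.
        prob_space M \<longrightarrow> sets M = sets borel \<longrightarrow>
        centered_gaussian M (\<lambda>z. z) \<longrightarrow>
        loewner_le (cov_matrix M fst) W \<longrightarrow> loewner_le (cov_matrix M snd) W \<longrightarrow>
        integral\<^sup>L M (\<lambda>z. (h (fst z) - h (snd z))\<^sup>2)
          \<le> \<kappa>\<^sup>2 * (integral\<^sup>L M (\<lambda>z. (norm (fst z - snd z))\<^sup>2)) powr \<gamma>)"

end

theory Submission imports Defs begin

lemma exp_ge_s: "(s::real) \<le> exp (s\<^sup>2/2)"
proof -
  have "1 + s\<^sup>2/2 \<le> exp (s\<^sup>2/2)" by (rule exp_ge_add_one_self)
  moreover have "s \<le> 1 + s\<^sup>2/2" proof -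
    have "0 \<le> (s-1)\<^sup>2" by simp
    thus ?thesis by (simp add: power2_diff field_simps)
  qed
  ultimately show ?thesis by linarith
qed

lemma normal_density_pt:
  assumes "\<sigma> > 0" "y \<noteq> 0"
  shows "normal_density 0 \<sigma> y \<le> 1 / (2 * \<bar>y\<bar>)"
proof -
  define s where "s = \<bar>y\<bar> / \<sigma>"
  have s: "s > 0" using assms by (simp add: s_def)
  have e: "exp (-(y\<^sup>2) / (2*\<sigma>\<^sup>2)) = 1 / exp (s\<^sup>2/2)"
  proof -
    have "-(y\<^sup>2) / (2*\<sigma>\<^sup>2) = - (s\<^sup>2/2)" using assms by (simp add: s_def power_divide)
    thus ?thesis by (simp add: exp_minus inverse_eq_divide)
  qed
  have "exp (-(y\<^sup>2) / (2*\<sigma>\<^sup>2)) \<le> 1 / s"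
    unfolding e using exp_ge_s[of s] s by (simp add: divide_simps)
  also have "1/s = \<sigma> / \<bar>y\<bar>" using assms by (simp add: s_def)
  finally have E: "exp (-(y\<^sup>2) / (2*\<sigma>\<^sup>2)) \<le> \<sigma> / \<bar>y\<bar>" .
  have sq: "sqrt (2*pi*\<sigma>\<^sup>2) = sqrt (2*pi) * \<sigma>" using assms by (simp add: real_sqrt_mult)
  have "2 \<le> sqrt (2*pi)" using pi_gt3 by (simp add: real_le_rsqrt)
  hence "2*\<sigma> \<le> sqrt (2*pi*\<sigma>\<^sup>2)" using sq assms by simp
  hence "1 / sqrt (2*pi*\<sigma>\<^sup>2) \<le> 1/(2*\<sigma>)" using assms by (intro divide_left_mono) auto
  hence "normal_density 0 \<sigma> y \<le> 1/(2*\<sigma>) * (\<sigma> / \<bar>y\<bar>)"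
    unfolding normal_density_def using E assms by (intro mult_mono) auto
  thus ?thesis using assms by simp
qed

lemma normal_interval:
  assumes "\<sigma> > 0" "0 < m" "m \<le> \<bar>a\<bar>" "0 < t" "t < m/4"
  shows "measure (density lborel (normal_density 0 \<sigma>)) {y. \<bar>y - a\<bar> \<le> t} \<le> 2*t/m"
proof -
  have set: "{y. \<bar>y - a\<bar> \<le> t} = {a-t..a+t}" by auto
  have pt: "normal_density 0 \<sigma> y \<le> 1/m" if "y \<in> {a-t..a+t}" for y
  proof -
    have "\<bar>y\<bar> \<ge> m/2" using that assms by auto
    hence "1/(2*\<bar>y\<bar>) \<le> 1/m" using assms by (simp add: divide_simps)
    moreover have "y \<noteq> 0" using \<open>\<bar>y\<bar> \<ge> m/2\<close> assms by auto
    ultimately show ?thesis using normal_density_pt[OF assms(1)] by (meson order_trans)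
  qed
  have "emeasure (density lborel (normal_density 0 \<sigma>)) {a-t..a+t}
      = (\<integral>\<^sup>+ y. ennreal (normal_density 0 \<sigma> y) * indicator {a-t..a+t} y \<partial>lborel)"
    by (simp add: emeasure_density)
  also have "\<dots> \<le> (\<integral>\<^sup>+ y. ennreal (1/m) * indicator {a-t..a+t} y \<partial>lborel)"
    using pt by (intro nn_integral_mono) (auto split: split_indicator intro!: ennreal_leI)
  also have "\<dots> = ennreal (1/m) * ennreal (2*t)"
    using assms by (simp add: nn_integral_cmult_indicator)
  also have "\<dots> = ennreal (2*t/m)" using assms by (simp add: ennreal_mult[symmetric])
  finally have "emeasure (density lborel (normal_density 0 \<sigma>)) {a-t..a+t} \<le> ennreal (2*t/m)" .
  thus ?thesis unfolding set measure_def using assms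
    by (simp add: enn2real_leI)
qed

lemma gauss_prob_bound:
  fixes M :: "'b::euclidean_space measure"
  assumes P: "prob_space M" and S: "sets M = sets borel" and G: "centered_gaussian M (\<lambda>z. z)"
    and "0 < m" "m \<le> \<bar>b\<bar>" "0 < t"
  shows "measure M {z. \<bar>c \<bullet> z - b\<bar> \<le> t} \<le> 4*t/m"
proof (cases "t < m/4")
  case False
  have "measure M {z. \<bar>c \<bullet> z - b\<bar> \<le> t} \<le> 1" using P by (simp add: prob_space.prob_le_1)
  also have "1 \<le> 4*t/m" using False assms by (simp add: field_simps)
  finally show ?thesis .
next
  case True
  from G obtain \<sigma> where s0: "\<sigma> \<ge> 0" and D: "distr M borel (\<lambda>z. c \<bullet> z) =
          (if \<sigma> = 0 then return borel 0 else density lborel (normal_density 0 \<sigma>))"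
    unfolding centered_gaussian_def by auto
  have meas: "(\<lambda>z. c \<bullet> z) \<in> measurable M borel"
    unfolding measurable_cong_sets[OF S refl] by simp
  have sp: "space M = UNIV" using sets_eq_imp_space_eq[OF S] by simp
  have Sb: "{y::real. \<bar>y - b\<bar> \<le> t} \<in> sets borel" by measurable
  have eq: "measure M {z. \<bar>c \<bullet> z - b\<bar> \<le> t} = measure (distr M borel (\<lambda>z. c \<bullet> z)) {y. \<bar>y - b\<bar> \<le> t}"
    using measure_distr[OF meas Sb] sp by (simp add: vimage_def)
  show ?thesis
  proof (cases "\<sigma> = 0")
    case True
    have "0 \<notin> {y::real. \<bar>y - b\<bar> \<le> t}" using assms \<open>t < m/4\<close> by auto
    hence "measure M {z. \<bar>c \<bullet> z - b\<bar> \<le> t} = 0" unfolding eq D using True Sb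
      by (simp add: measure_return)
    thus ?thesis using assms by simp
  next
    case False
    hence sp0: "\<sigma> > 0" using s0 by simp
    hence "measure M {z. \<bar>c \<bullet> z - b\<bar> \<le> t} \<le> 2*t/m" unfolding eq D using s0
      using normal_interval[OF sp0, of m b t] assms sp0 \<open>t < m/4\<close> by simp
    also have "\<dots> \<le> 4*t/m" using assms by (simp add: divide_right_mono)
    finally show ?thesis .
  qed
qed

lemma gauss_sq_integrable:
  fixes M :: "'b::euclidean_space measure"
  assumes P: "prob_space M" and S: "sets M = sets borel" and G: "centered_gaussian M (\<lambda>z. z)"
  shows "integrable M (\<lambda>z. (c \<bullet> z)\<^sup>2)"
proof -
  from G obtain \<sigma> where s0: "\<sigma> \<ge> 0" and D: "distr M borel (\<lambda>z. c \<bullet> z) =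
          (if \<sigma> = 0 then return borel 0 else density lborel (normal_density 0 \<sigma>))"
    unfolding centered_gaussian_def by auto
  have meas: "(\<lambda>z. c \<bullet> z) \<in> measurable M borel"
    unfolding measurable_cong_sets[OF S refl] by simp
  have "integrable (distr M borel (\<lambda>z. c \<bullet> z)) (\<lambda>y::real. y\<^sup>2)"
  proof (cases "\<sigma> = 0")
    case True
    interpret prob_space "return borel (0::real)" by (rule prob_space_return) simp
    have "integrable (return borel (0::real)) (\<lambda>y::real. y\<^sup>2)"
      by (intro integrable_const_bound[where B=0]) (auto simp: AE_return)
    thus ?thesis unfolding D using True by simp
  next
    case False
    hence sp0: "\<sigma> > 0" using s0 by simp
    have "integrable lborel (\<lambda>x. normal_density 0 \<sigma> x * (x - 0)^2)"
      by (rule integrable_normal_moment[OF sp0])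
    hence "integrable (density lborel (normal_density 0 \<sigma>)) (\<lambda>y::real. y\<^sup>2)"
      by (subst integrable_density) (auto simp: mult.commute)
    thus ?thesis unfolding D using sp0 by simp
  qed
  thus ?thesis using integrable_distr_eq[OF meas, of "\<lambda>y. y\<^sup>2"] by simp
qed
lemma fst_bm[measurable]: "fst \<in> borel_measurable (borel::('a::euclidean_space \<times> 'b::euclidean_space) measure)"
  by (intro borel_measurable_continuous_onI continuous_intros)
lemma snd_bm[measurable]: "snd \<in> borel_measurable (borel::('a::euclidean_space \<times> 'b::euclidean_space) measure)"
  by (intro borel_measurable_continuous_onI continuous_intros)

lemma powr_third_cube: "x > 0 \<Longrightarrow> (x powr (1/3::real)) ^ 3 = (x::real)"
  by (simp add: powr_power)

theorem lemma6p2: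
  fixes a :: "real^'d" and W :: "real^'d^'d"
  assumes "\<forall>i. a $ i \<noteq> 0"
    and "psd_matrix W"
  shows "kgw_lipschitz
           (3 * (real CARD('d) / Min (range (\<lambda>i. \<bar>a $ i\<bar>))) powr (1/3)) (1/3) W
           (\<lambda>x. indicator {x. \<forall>i. x $ i \<le> a $ i} x)"
proof -
  define d where "d = real CARD('d)"
  define m where "m = Min (range (\<lambda>i. \<bar>a $ i\<bar>))"
  have d1: "d \<ge> 1" unfolding d_def by simp
  have mle: "m \<le> \<bar>a $ i\<bar>" for i unfolding m_def by (intro Min_le) auto
  have "m \<in> range (\<lambda>i. \<bar>a $ i\<bar>)" unfolding m_def by (intro Min_in) auto
  hence m0: "m > 0" using assms(1) by auto
  define r where "r = (d/m) powr (1/3)"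
  have r0: "r > 0" unfolding r_def using d1 m0 by simp
  have r3: "r^3 = d/m" unfolding r_def using d1 m0 by (simp add: powr_third_cube)
  define A where "A = {x::real^'d. \<forall>i. x $ i \<le> a $ i}"
  define h where "h = (\<lambda>x. indicator A x :: real)"
  have hm: "h \<in> borel_measurable borel" unfolding h_def A_def by measurable
  show ?thesis
    unfolding kgw_lipschitz_def d_def[symmetric] m_def[symmetric] r_def[symmetric]
      A_def[symmetric] h_def[symmetric]
  proof (intro conjI allI impI)
    show "3 * r > 0" using r0 by simp
    show "0 < (1/3::real)" "(1/3::real) \<le> 1" by auto
    show "psd_matrix W" by (rule assms(2))
    show "h \<in> borel_measurable borel" by (rule hm)
  next
    fix M :: "((real^'d) \<times> (real^'d)) measure"
    assume P: "prob_space M" and S: "sets M = sets borel" and G: "centered_gaussian M (\<lambda>z. z)"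
    interpret prob_space M by (rule P)
    have sp: "space M = UNIV" using sets_eq_imp_space_eq[OF S] by simp
    have BM: "f \<in> borel_measurable M" if "f \<in> borel_measurable borel" for f :: "_ \<Rightarrow> real"
      using that unfolding measurable_cong_sets[OF S refl] .
    have SM: "B \<in> sets M" if "B \<in> sets borel" for B using that S by simp
    define L where "L = integral\<^sup>L M (\<lambda>z. (h (fst z) - h (snd z))\<^sup>2)"
    define D where "D = integral\<^sup>L M (\<lambda>z. (norm (fst z - snd z))\<^sup>2)"
    define c where "c = (\<lambda>i::'d. (axis i (1::real), - axis i (1::real)))"
    have nsq: "(norm (fst z - snd z))\<^sup>2 = (\<Sum>i\<in>UNIV. (c i \<bullet> z)\<^sup>2)" for z :: "(real^'d) \<times> (real^'d)"
    proof -
      have "(norm (fst z - snd z))\<^sup>2 = (fst z - snd z) \<bullet> (fst z - snd z)" by (simp add: dot_square_norm)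
      also have "\<dots> = (\<Sum>i\<in>UNIV. (fst z $ i - snd z $ i)\<^sup>2)"
        by (simp add: inner_vec_def power2_eq_square)
      also have "\<dots> = (\<Sum>i\<in>UNIV. (c i \<bullet> z)\<^sup>2)"
        by (intro sum.cong refl) (simp add: c_def inner_axis' prod.case_eq_if split_beta inner_prod_def)
      finally show ?thesis .
    qed
    have intD: "integrable M (\<lambda>z. (norm (fst z - snd z))\<^sup>2)"
      unfolding nsq using Bochner_Integration.integrable_sum[where I=UNIV and M=M and f="\<lambda>i z. (c i \<bullet> z)\<^sup>2"] gauss_sq_integrable[OF P S G] by blast
    have D0: "D \<ge> 0" unfolding D_def by (intro integral_nonneg_AE) auto
    have intL: "integrable M (\<lambda>z. (h (fst z) - h (snd z))\<^sup>2)"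
    proof (rule integrable_const_bound[where B=1])
      have [measurable]: "h \<in> borel_measurable borel" by (rule hm)
      have "(\<lambda>z. (h (fst z) - h (snd z))\<^sup>2) \<in> borel_measurable borel" by measurable
      thus "(\<lambda>z. (h (fst z) - h (snd z))\<^sup>2) \<in> borel_measurable M" by (rule BM)
      show "AE x in M. norm ((h (fst x) - h (snd x))\<^sup>2) \<le> 1"
        by (auto simp: h_def indicator_def)
    qed
    have key: "L \<le> d * (4*t/m) + D / t\<^sup>2" if t0: "t > 0" for t
    proof -
      define E where "E = (\<lambda>i. {z::(real^'d)\<times>(real^'d). \<bar>(axis i 1, 0) \<bullet> z - a $ i\<bar> \<le> t})"
      have Eb: "E i \<in> sets borel" for i unfolding E_def by measurable
      have pw: "(h (fst z) - h (snd z))\<^sup>2 \<le> (\<Sum>i\<in>UNIV. indicator (E i) z) + (norm (fst z - snd z))\<^sup>2 / t\<^sup>2"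
        for z
      proof (cases "h (fst z) = h (snd z)")
        case True
        thus ?thesis by (simp add: sum_nonneg)
      next
        case False
        hence l1: "(h (fst z) - h (snd z))\<^sup>2 = 1" by (auto simp: h_def indicator_def)
        have "(fst z \<in> A) \<noteq> (snd z \<in> A)" using False by (auto simp: h_def indicator_def)
        hence "\<exists>i. \<not> (fst z $ i \<le> a $ i \<longleftrightarrow> snd z $ i \<le> a $ i)"
          unfolding A_def by blast
        then obtain i where i: "\<not> (fst z $ i \<le> a $ i \<longleftrightarrow> snd z $ i \<le> a $ i)" by blast
        hence le: "\<bar>fst z $ i - a $ i\<bar> \<le> \<bar>fst z $ i - snd z $ i\<bar>" by auto
        show ?thesis
        proof (cases "\<bar>fst z $ i - a $ i\<bar> \<le> t")
          case True
          hence "indicator (E i) z = (1::real)" by (simp add: E_def inner_axis' split_beta inner_prod_def indicator_def)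
          hence "1 \<le> (\<Sum>i\<in>UNIV. indicator (E i) z :: real)"
            using member_le_sum[of i UNIV "\<lambda>i. indicator (E i) z :: real"] by simp
          moreover have "0 \<le> (norm (fst z - snd z))\<^sup>2 / t\<^sup>2" by simp
          ultimately show ?thesis using l1 by linarith
        next
          case False
          hence "t < \<bar>(fst z - snd z) $ i\<bar>" using le by simp
          also have "\<dots> \<le> norm (fst z - snd z)" by (rule component_le_norm_cart)
          finally have "t\<^sup>2 < (norm (fst z - snd z))\<^sup>2" using t0 by (simp add: power_strict_mono)
          hence "1 < (norm (fst z - snd z))\<^sup>2 / t\<^sup>2" using t0 by simp
          moreover have "0 \<le> (\<Sum>i\<in>UNIV. indicator (E i) z :: real)" by (simp add: sum_nonneg)
          ultimately show ?thesis using l1 by linarith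
        qed
      qed
      have intE: "integrable M (indicator (E i) :: _ \<Rightarrow> real)" for i
        using Eb S by (intro integrable_real_indicator) (auto simp: emeasure_eq_measure)
      have "L \<le> integral\<^sup>L M (\<lambda>z. (\<Sum>i\<in>UNIV. indicator (E i) z) + (norm (fst z - snd z))\<^sup>2 / t\<^sup>2)"
        unfolding L_def using pw intL intE intD
        by (intro integral_mono Bochner_Integration.integrable_add Bochner_Integration.integrable_sum integrable_divide) auto
      also have "\<dots> = (\<Sum>i\<in>UNIV. measure M (E i)) + D / t\<^sup>2"
        using intE intD sp by (simp add: integral_add integrable_sum D_def)
      also have "(\<Sum>i\<in>UNIV. measure M (E i)) \<le> (\<Sum>i\<in>(UNIV::'d set). 4*t/m)"
        unfolding E_def by (intro sum_mono gauss_prob_bound[OF P S G m0 mle t0])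
      also have "(\<Sum>i\<in>(UNIV::'d set). 4*t/m) = d * (4*t/m)" by (simp add: d_def)
      finally show ?thesis by simp
    qed
    show "L \<le> (3 * r)\<^sup>2 * D powr (1/3)"
    proof (cases "D = 0")
      case True
      have "L \<le> 0"
      proof (rule ccontr)
        assume "\<not> L \<le> 0"
        hence L0: "L > 0" by simp
        define t where "t = L * m / (8 * d)"
        have t0: "t > 0" unfolding t_def using L0 m0 d1 by simp
        have "L \<le> d * (4*t/m)" using key[OF t0] True by simp
        also have "d * (4*t/m) = L/2" unfolding t_def using m0 d1 by (simp add: field_simps)
        finally show False using L0 by simp
      qed
      thus ?thesis using True by simp
    next
      case False
      hence Dp: "D > 0" using D0 by simp
      define q where "q = D powr (1/3)"
      have q0: "q > 0" unfolding q_def using Dp by simp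
      have q3: "q^3 = D" unfolding q_def using Dp by (simp add: powr_third_cube)
      define t where "t = q / r"
      have t0: "t > 0" unfolding t_def using q0 r0 by simp
      have "L \<le> d * (4*t/m) + D / t\<^sup>2" by (rule key[OF t0])
      also have "d * (4*t/m) = 4 * (d/m) * t" by simp
      also have "4 * (d/m) * t + D / t\<^sup>2 = 5 * r\<^sup>2 * q"
        unfolding r3[symmetric] q3[symmetric] t_def using q0 r0
        by (simp add: field_simps power2_eq_square power3_eq_cube)
      also have "\<dots> \<le> (3 * r)\<^sup>2 * D powr (1/3)"
        unfolding q_def[symmetric] using q0 r0 by (simp add: power_mult_distrib)
      finally show ?thesis .
    qed
  qed
qed

end
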